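(* Let $a>0$, $b>0$, $c>0$, $P>0$, $\mu>0$ be constants and set $\lambda_a=ac$, $\tilde\lambda_a=a(b+c)$. For $\gamma>0$ define $$\Delta(\gamma)=\frac{e^{\gamma P/\lambda_a}-1}{e^{\gamma P/\tilde\lambda_a}-1},\qquad \hat\Delta(\gamma)=\exp\!\Big(\gamma P\,\frac{\tilde\lambda_a-\lambda_a}{\tilde\lambda_a\lambda_a}\Big),$$ and for a positive function $D$ on $(0,\infty)$ let $$J[D]=\int_0^{\infty}\Big(1-\frac{ab}{\gamma P}\,D(\gamma)^{-c/b}\big(e^{\gamma P/(a(b+c))}-1\big)\Big)\frac{1}{\mu}e^{-\gamma/\mu}\,d\gamma.$$ Then $\Delta(\gamma)>\hat\Delta(\gamma)$ for every $\gamma>0$, and $$J[\hat\Delta]=1+\frac{ab}{P\mu}\ln\!\Big(\frac{a(b+c)}{a(b+c)+P\mu}\Big)<J[\Delta].$$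
   Context: In the paper, $a=l_{rw}\theta_r$ (path loss to the warden times $\theta_r=\sum_n\beta_r^n$, the total reflection amplitude-squared of the STAR-RIS), $b=\varpi_b=\mathbf w_b^H\mathbf w_b$, $c=\varpi_c=\mathbf w_c^H\mathbf w_c$, $P=P_j^{\max}$, and $\mu=\lambda_{rw}=\|\boldsymbol\Theta_t\mathbf h_{rc}^*\|_2^2$; the quantity $\gamma$ is exponentially distributed with mean $\mu$. $J[\Delta]$ is the (asymptotic) average minimum detection error probability $\overline P^*_{ea}$ of the warden and $J[\hat\Delta]=\hat P^*_{ea}$ is its lower bound used as the covertness constraint. *)

theory Defs
  imports "HOL-Analysis.Analysis"
begin

definition Delta :: "real \<Rightarrow> real \<Rightarrow> real \<Rightarrow> real \<Rightarrow> real \<Rightarrow> real" where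
  "Delta a b c P \<gamma> = (exp (\<gamma> * P / (a * c)) - 1) / (exp (\<gamma> * P / (a * (b + c))) - 1)"

definition Delta_hat :: "real \<Rightarrow> real \<Rightarrow> real \<Rightarrow> real \<Rightarrow> real \<Rightarrow> real" where
  "Delta_hat a b c P \<gamma> =
     exp (\<gamma> * P * ((a * (b + c) - a * c) / (a * (b + c) * (a * c))))"

definition J_integrand :: "real \<Rightarrow> real \<Rightarrow> real \<Rightarrow> real \<Rightarrow> real \<Rightarrow> (real \<Rightarrow> real) \<Rightarrow> real \<Rightarrow> real" where
  "J_integrand a b c P \<mu> D \<gamma> =
     (1 - (a * b) / (\<gamma> * P) * (D \<gamma>) powr (- c / b) * (exp (\<gamma> * P / (a * (b + c))) - 1))
     * (1 / \<mu>) * exp (- \<gamma> / \<mu>)"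

definition J :: "real \<Rightarrow> real \<Rightarrow> real \<Rightarrow> real \<Rightarrow> real \<Rightarrow> (real \<Rightarrow> real) \<Rightarrow> real" where
  "J a b c P \<mu> D = (LBINT \<gamma>:{0<..}. J_integrand a b c P \<mu> D \<gamma>)"

end

theory Submission
  imports Defs
begin


lemma inner_exp:
  fixes s :: real assumes s: "s > 0"
  shows "(\<integral>\<^sup>+g. ennreal (exp (- s * g)) * indicator {0<..} g \<partial>lborel) = ennreal (1 / s)"
proof -
  have "(\<integral>\<^sup>+g. ennreal (exp (- s * g)) * indicator {0<..} g \<partial>lborel)
      = (\<integral>\<^sup>+g. ennreal (exp (- s * g)) * indicator {0..} g \<partial>lborel)"
    by (intro nn_integral_cong_AE AE_I[where N="{0}"]) (auto split: split_indicator)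
  also have "\<dots> = ennreal (0 - (- exp (- s * 0) / s))"
  proof (rule nn_integral_FTC_atLeast)
    show "((\<lambda>x. - exp (- s * x) / s) \<longlongrightarrow> 0) at_top"
    proof -
      have "((\<lambda>x. - exp (- s * x) / s) \<longlongrightarrow> - 0 / s) at_top"
        by (intro tendsto_intros filterlim_compose[OF exp_at_bot]
             filterlim_tendsto_neg_mult_at_bot[OF tendsto_const] filterlim_ident) (use s in auto)
      then show ?thesis by simp
    qed
  qed (use s in \<open>auto intro!: derivative_eq_intros\<close>)
  finally show ?thesis by simp
qed

lemma frullani_nn:
  fixes k m :: real assumes k: "k > 0" and m: "m > 0"
  shows "(\<integral>\<^sup>+g. ennreal ((1 - exp (- k * g)) / g * exp (- m * g)) * indicator {0<..} g \<partial>lborel)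
         = ennreal (ln ((m + k) / m))"
proof -
  have inner1: "ennreal ((1 - exp (- k * g)) / g * exp (- m * g))
     = (\<integral>\<^sup>+t. ennreal (exp (- (t + m) * g)) * indicator {0..k} t \<partial>lborel)" if g: "g > 0" for g
  proof -
    have "(\<integral>\<^sup>+t. ennreal (exp (- (t + m) * g)) * indicator {0..k} t \<partial>lborel)
        = ennreal ((- exp (- (k + m) * g) / g) - (- exp (- (0 + m) * g) / g))"
      by (rule nn_integral_FTC_Icc) (use g k in \<open>auto intro!: derivative_eq_intros simp: field_simps\<close>)
    also have "(- exp (- (k + m) * g) / g) - (- exp (- (0 + m) * g) / g)
        = (1 - exp (- k * g)) / g * exp (- m * g)"
    proof -
      have "exp (- (k + m) * g) = exp (- k * g) * exp (- m * g)"
        by (simp add: exp_add[symmetric] ring_distribs)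
      then show ?thesis using g by (simp add: field_simps)
    qed
    finally show ?thesis by simp
  qed
  have "(\<integral>\<^sup>+g. ennreal ((1 - exp (- k * g)) / g * exp (- m * g)) * indicator {0<..} g \<partial>lborel)
     = (\<integral>\<^sup>+g. \<integral>\<^sup>+t. ennreal (exp (- (t + m) * g)) * indicator {0..k} t * indicator {0<..} g \<partial>lborel \<partial>lborel)"
  proof (rule nn_integral_cong)
    fix g :: real
    show "ennreal ((1 - exp (- k * g)) / g * exp (- m * g)) * indicator {0<..} g
      = (\<integral>\<^sup>+t. ennreal (exp (- (t + m) * g)) * indicator {0..k} t * indicator {0<..} g \<partial>lborel)"
    proof (cases "g > 0")
      case True
      show ?thesis unfolding inner1[OF True] by (simp add: nn_integral_multc)
    qed simp
  qed
  also have "\<dots> = (\<integral>\<^sup>+t. \<integral>\<^sup>+g. ennreal (exp (- (t + m) * g)) * indicator {0..k} t * indicator {0<..} g \<partial>lborel \<partial>lborel)"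
    by (rule lborel_pair.Fubini'[symmetric]) auto
  also have "\<dots> = (\<integral>\<^sup>+t. ennreal (1 / (t + m)) * indicator {0..k} t \<partial>lborel)"
  proof (rule nn_integral_cong)
    fix t :: real
    show "(\<integral>\<^sup>+g. ennreal (exp (- (t + m) * g)) * indicator {0..k} t * indicator {0<..} g \<partial>lborel)
        = ennreal (1 / (t + m)) * indicator {0..k} t"
    proof (cases "t \<in> {0..k}")
      case True
      then have "t + m > 0" using m by auto
      from inner_exp[OF this] show ?thesis using True
        by (simp add: mult.assoc[symmetric] mult.commute[of _ "indicator {0..k} t"] nn_integral_cmult[symmetric])
    qed simp
  qed
  also have "\<dots> = ennreal (ln (k + m) - ln (0 + m))"
    by (rule nn_integral_FTC_Icc) (use k m in \<open>auto intro!: derivative_eq_intros simp: field_simps\<close>)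
  also have "ln (k + m) - ln (0 + m) = ln ((m + k) / m)"
    using k m by (simp add: ln_div add.commute)
  finally show ?thesis .
qed


lemma frullani_bochner:
  fixes k m :: real assumes k: "k > 0" and m: "m > 0"
  shows "has_bochner_integral lborel
     (\<lambda>g. indicator {0<..} g *\<^sub>R ((1 - exp (- k * g)) / g * exp (- m * g))) (ln ((m + k) / m))"
proof (rule has_bochner_integral_nn_integral)
  show "(\<lambda>g. indicator {0<..} g *\<^sub>R ((1 - exp (- k * g)) / g * exp (- m * g))) \<in> borel_measurable lborel"
    by measurable
  show "AE x in lborel. 0 \<le> indicator {0<..} x *\<^sub>R ((1 - exp (- k * x)) / x * exp (- m * x))"
    using k by (intro AE_I2) (auto split: split_indicator intro!: divide_nonneg_pos)
  show "0 \<le> ln ((m + k) / m)" using k m by simp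
  have "(\<integral>\<^sup>+ x. ennreal (indicator {0<..} x *\<^sub>R ((1 - exp (- k * x)) / x * exp (- m * x))) \<partial>lborel)
     = (\<integral>\<^sup>+g. ennreal ((1 - exp (- k * g)) / g * exp (- m * g)) * indicator {0<..} g \<partial>lborel)"
    by (intro nn_integral_cong) (auto split: split_indicator)
  also have "\<dots> = ennreal (ln ((m + k) / m))" by (rule frullani_nn[OF k m])
  finally show "(\<integral>\<^sup>+ x. ennreal (indicator {0<..} x *\<^sub>R ((1 - exp (- k * x)) / x * exp (- m * x))) \<partial>lborel)
     = ennreal (ln ((m + k) / m))" .
qed

lemma density_bochner:
  fixes m :: real assumes m: "m > 0"
  shows "has_bochner_integral lborel (\<lambda>g. indicator {0<..} g *\<^sub>R (m * exp (- m * g))) 1"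
proof (rule has_bochner_integral_nn_integral)
  show "(\<lambda>g. indicator {0<..} g *\<^sub>R (m * exp (- m * g))) \<in> borel_measurable lborel"
    by measurable
  show "AE x in lborel. 0 \<le> indicator {0<..} x *\<^sub>R (m * exp (- m * x))"
    using m by (intro AE_I2) (auto split: split_indicator)
  have "(\<integral>\<^sup>+ x. ennreal (indicator {0<..} x *\<^sub>R (m * exp (- m * x))) \<partial>lborel)
     = (\<integral>\<^sup>+g. ennreal m * (ennreal (exp (- m * g)) * indicator {0<..} g) \<partial>lborel)"
    using m by (intro nn_integral_cong) (auto split: split_indicator simp: ennreal_mult)
  also have "\<dots> = ennreal m * ennreal (1 / m)"
    using inner_exp[OF m] by (simp add: nn_integral_cmult)
  also have "\<dots> = ennreal 1" using m by (simp add: ennreal_mult[symmetric])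
  finally show "(\<integral>\<^sup>+ x. ennreal (indicator {0<..} x *\<^sub>R (m * exp (- m * x))) \<partial>lborel) = ennreal 1" .
qed simp

theorem mainTheorem4:
  fixes a b c P \<mu> :: real
  assumes "a > 0" "b > 0" "c > 0" "P > 0" "\<mu> > 0"
  shows "(\<forall>\<gamma>>0. Delta a b c P \<gamma> > Delta_hat a b c P \<gamma>)
    \<and> set_integrable lborel {0<..} (J_integrand a b c P \<mu> (Delta_hat a b c P))
    \<and> set_integrable lborel {0<..} (J_integrand a b c P \<mu> (Delta a b c P))
    \<and> J a b c P \<mu> (Delta_hat a b c P)
        = 1 + (a * b) / (P * \<mu>) * ln (a * (b + c) / (a * (b + c) + P * \<mu>))
    \<and> J a b c P \<mu> (Delta_hat a b c P) < J a b c P \<mu> (Delta a b c P)"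
proof -
  note pos = assms
  define B where "B = a * (b + c)"
  define k where "k = P / B"
  define m where "m = 1 / \<mu>"
  have B: "B > 0" using pos by (simp add: B_def)
  have k: "k > 0" using pos B by (simp add: k_def)
  have m: "m > 0" using pos by (simp add: m_def)
  define G where "G = (\<lambda>g::real. (1 - exp (- k * g)) / g * exp (- m * g))"
  define dens where "dens = (\<lambda>g::real. m * exp (- m * g))"
  define C where "C = a * b / P * m"
  have C: "C > 0" using pos m by (simp add: C_def)
  have hatpow: "Delta_hat a b c P g powr (- c / b) = exp (- k * g)" for g
  proof -
    have "g * P * ((a * (b + c) - a * c) / (a * (b + c) * (a * c))) * (- c / b) = - k * g"
    proof -
      have ne: "a \<noteq> 0" "b \<noteq> 0" "c \<noteq> 0" "b + c \<noteq> 0" using pos by auto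
      have "(a * (b + c) - a * c) / (a * (b + c) * (a * c)) * (- c / b) = - 1 / (a * (b + c))"
      proof -
        have h: "a * b / (D * (a * c)) * (- c / b) = - 1 / D" if "D \<noteq> 0" for D
          using ne that by (simp add: field_simps)
        have "a * (b + c) - a * c = a * b" by (simp add: algebra_simps)
        then show ?thesis using h[of "a * (b + c)"] ne by simp
      qed
      then have "g * P * ((a * (b + c) - a * c) / (a * (b + c) * (a * c))) * (- c / b)
          = g * P * (- 1 / (a * (b + c)))" by (simp only: mult.assoc)
      then show ?thesis by (simp add: k_def B_def)
    qed
    then show ?thesis by (simp add: Delta_hat_def exp_powr_real)
  qed
  have Jhat: "J_integrand a b c P \<mu> (Delta_hat a b c P) g = dens g - C * G g" if g: "g > 0" for g
  proof -
    have e1: "exp (- k * g) * exp (g * P / (a * (b + c))) = 1"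
      by (simp add: exp_add[symmetric] k_def B_def)
    have e2: "exp (- g / \<mu>) = exp (- m * g)" by (simp add: m_def)
    have "J_integrand a b c P \<mu> (Delta_hat a b c P) g
       = (1 - (a * b) / (g * P) * (exp (- k * g) * exp (g * P / (a * (b + c))) - exp (- k * g))) * m * exp (- m * g)"
      unfolding J_integrand_def hatpow e2 by (simp add: m_def right_diff_distrib mult.assoc)
    also have "\<dots> = dens g - C * G g"
      unfolding e1 using g pos by (simp add: dens_def C_def G_def field_simps)
    finally show ?thesis .
  qed
  have ineq: "Delta a b c P g > Delta_hat a b c P g" if g: "g > 0" for g
  proof -
    define e1 where "e1 = exp (g * P / (a * c))"
    define u where "u = exp (g * P / (a * (b + c)))"
    have "g * P / (a * (b + c)) < g * P / (a * c)"
      using pos g by (intro divide_strict_left_mono) (auto simp: mult_pos_pos)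
    then have ue: "u < e1" by (simp add: u_def e1_def)
    have u1: "u > 1" using pos g by (simp add: u_def)
    have "g * P * ((a * (b + c) - a * c) / (a * (b + c) * (a * c))) = g * P / (a * c) - g * P / (a * (b + c))"
    proof -
      have h: "(D - E) / (D * E) = 1 / E - 1 / D" if "D \<noteq> 0" "E \<noteq> 0" for D E :: real
        using that by (simp add: field_simps)
      have "a * (b + c) \<noteq> 0" "a * c \<noteq> 0" using pos by auto
      from h[OF this] show ?thesis by (simp add: right_diff_distrib)
    qed
    then have dh: "Delta_hat a b c P g = e1 / u"
      by (simp add: Delta_hat_def e1_def u_def exp_diff)
    have d: "Delta a b c P g = (e1 - 1) / (u - 1)" by (simp add: Delta_def e1_def u_def)
    have "e1 / u < (e1 - 1) / (u - 1)"
      using ue u1 by (simp add: divide_simps) (simp add: algebra_simps)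
    then show ?thesis using dh d by simp
  qed
  have hatpos: "Delta_hat a b c P g > 0" for g by (simp add: Delta_hat_def)
  have cmp: "J_integrand a b c P \<mu> (Delta_hat a b c P) g < J_integrand a b c P \<mu> (Delta a b c P) g
     \<and> J_integrand a b c P \<mu> (Delta a b c P) g \<le> dens g" if g: "g > 0" for g
  proof -
    have r: "- c / b < 0" using pos by simp
    have lt: "Delta a b c P g powr (- c / b) < Delta_hat a b c P g powr (- c / b)"
      by (rule powr_less_mono2_neg[OF r hatpos ineq[OF g]])
    define X where "X = (a * b) / (g * P)"
    define Y where "Y = exp (g * P / (a * (b + c))) - 1"
    define W where "W = (1 / \<mu>) * exp (- g / \<mu>)"
    define p1 where "p1 = Delta a b c P g powr (- c / b)"
    define p2 where "p2 = Delta_hat a b c P g powr (- c / b)"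
    have u1: "Y > 0" using pos g by (simp add: Y_def)
    have q: "X > 0" using pos g by (simp add: X_def)
    have w: "W > 0" using pos by (simp add: W_def)
    have nn: "p1 \<ge> 0" by (simp add: p1_def)
    have lt': "p1 < p2" using lt by (simp add: p1_def p2_def)
    have "J_integrand a b c P \<mu> (Delta_hat a b c P) g = (1 - X * p2 * Y) * W"
      "J_integrand a b c P \<mu> (Delta a b c P) g = (1 - X * p1 * Y) * W"
      by (simp_all add: J_integrand_def X_def Y_def W_def p1_def p2_def mult.assoc)
    moreover have "dens g = W" by (simp add: dens_def W_def m_def)
    moreover have s12: "X * p1 * Y < X * p2 * Y"
      using mult_strict_right_mono[OF mult_strict_left_mono[OF lt' q] u1] .
    moreover have s1: "X * p1 * Y \<ge> 0"
      using q u1 nn by simp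
    moreover have "(1 - X * p2 * Y) * W < (1 - X * p1 * Y) * W"
      using s12 w by (intro mult_strict_right_mono) auto
    moreover have "(1 - X * p1 * Y) * W \<le> W"
      using s1 w by (simp add: mult_le_cancel_right2 algebra_simps)
    ultimately show ?thesis by simp
  qed
  have hG: "has_bochner_integral lborel (\<lambda>g. indicator {0<..} g *\<^sub>R G g) (ln ((m + k) / m))"
    unfolding G_def by (rule frullani_bochner[OF k m])
  have hD: "has_bochner_integral lborel (\<lambda>g. indicator {0<..} g *\<^sub>R dens g) 1"
    unfolding dens_def by (rule density_bochner[OF m])
  have eqhat: "(\<lambda>g. indicator {0<..} g *\<^sub>R J_integrand a b c P \<mu> (Delta_hat a b c P) g)
     = (\<lambda>g. indicator {0<..} g *\<^sub>R dens g - C * (indicator {0<..} g *\<^sub>R G g))"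
    by (rule ext) (auto simp: Jhat split: split_indicator)
  have hH: "has_bochner_integral lborel (\<lambda>g. indicator {0<..} g *\<^sub>R J_integrand a b c P \<mu> (Delta_hat a b c P) g)
      (1 - C * ln ((m + k) / m))"
    unfolding eqhat by (intro has_bochner_integral_diff has_bochner_integral_mult_right hD hG)
  have int_hat: "set_integrable lborel {0<..} (J_integrand a b c P \<mu> (Delta_hat a b c P))"
    unfolding set_integrable_def using hH by (rule integrable.intros)
  have Jhat_val: "J a b c P \<mu> (Delta_hat a b c P) = 1 - C * ln ((m + k) / m)"
    unfolding J_def set_lebesgue_integral_def using hH by (rule has_bochner_integral_integral_eq)
  have meas: "(\<lambda>g. indicator {0<..} g *\<^sub>R J_integrand a b c P \<mu> (Delta a b c P) g) \<in> borel_measurable lborel"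
    unfolding J_integrand_def Delta_def by measurable
  have int_D: "set_integrable lborel {0<..} (J_integrand a b c P \<mu> (Delta a b c P))"
    unfolding set_integrable_def
  proof (rule Bochner_Integration.integrable_bound[OF _ meas])
    show "integrable lborel (\<lambda>g. indicator {0<..} g *\<^sub>R dens g + \<bar>indicator {0<..} g *\<^sub>R J_integrand a b c P \<mu> (Delta_hat a b c P) g\<bar>)"
      using integrable.intros[OF hD] integrable.intros[OF hH]
      by (intro Bochner_Integration.integrable_add integrable_abs)
    show "AE x in lborel. norm (indicator {0<..} x *\<^sub>R J_integrand a b c P \<mu> (Delta a b c P) x)
       \<le> norm (indicator {0<..} x *\<^sub>R dens x + \<bar>indicator {0<..} x *\<^sub>R J_integrand a b c P \<mu> (Delta_hat a b c P) x\<bar>)"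
    proof (intro AE_I2)
      fix x :: real
      show "norm (indicator {0<..} x *\<^sub>R J_integrand a b c P \<mu> (Delta a b c P) x)
       \<le> norm (indicator {0<..} x *\<^sub>R dens x + \<bar>indicator {0<..} x *\<^sub>R J_integrand a b c P \<mu> (Delta_hat a b c P) x\<bar>)"
      proof (cases "x > 0")
        case True
        have "dens x \<ge> 0" using m by (simp add: dens_def)
        then show ?thesis using cmp[OF True] True by auto
      qed simp
    qed
  qed
  define d where "d = (\<lambda>g. indicator {0<..} g *\<^sub>R J_integrand a b c P \<mu> (Delta a b c P) g
      - indicator {0<..} g *\<^sub>R J_integrand a b c P \<mu> (Delta_hat a b c P) g)"
  have int_d: "integrable lborel d"
    unfolding d_def using int_D int_hat unfolding set_integrable_def by (rule Bochner_Integration.integrable_diff)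
  have d_nonneg: "0 \<le> d g" for g
    using cmp[of g] by (cases "g > 0") (auto simp: d_def)
  have d_pos: "0 < d g" if "g > 0" for g
    using cmp[OF that] that by (simp add: d_def)
  have "integral\<^sup>L lborel d \<noteq> 0"
  proof
    assume "integral\<^sup>L lborel d = 0"
    then have "AE x in lborel. d x = 0"
      using integral_nonneg_eq_0_iff_AE[OF int_d] d_nonneg by auto
    then have "AE x in lborel. x \<notin> {0<..<1::real}"
      by (rule AE_mp) (auto intro!: AE_I2 dest: d_pos)
    then have "emeasure lborel {0<..<1::real} = 0"
      by (subst (asm) AE_iff_measurable[of "{0<..<1}"]) auto
    then show False by simp
  qed
  moreover have "integral\<^sup>L lborel d \<ge> 0"
    using d_nonneg by (simp add: integral_nonneg)
  ultimately have dpos: "integral\<^sup>L lborel d > 0" by simp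
  have "integral\<^sup>L lborel d = J a b c P \<mu> (Delta a b c P) - J a b c P \<mu> (Delta_hat a b c P)"
    unfolding d_def J_def set_lebesgue_integral_def
    using int_D int_hat unfolding set_integrable_def by (rule Bochner_Integration.integral_diff)
  with dpos have lt: "J a b c P \<mu> (Delta_hat a b c P) < J a b c P \<mu> (Delta a b c P)" by simp
  have val: "1 - C * ln ((m + k) / m) = 1 + (a * b) / (P * \<mu>) * ln (a * (b + c) / (a * (b + c) + P * \<mu>))"
  proof -
    have "(m + k) / m = (B + P * \<mu>) / B" using pos B by (simp add: m_def k_def field_simps)
    then have "ln ((m + k) / m) = - ln (B / (B + P * \<mu>))"
      using pos B by (simp add: ln_div)
    then show ?thesis by (simp add: C_def m_def B_def)
  qed
  show ?thesis using ineq int_hat int_D Jhat_val val lt by auto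
qed

end
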